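(* Let $\alpha,\beta$ be fixed nonzero real numbers. There exist constants $C,N>0$, independent of $n$ and of the point set, such that for every $n>N$ and every set $P\subset\mathbb R^2$ of $n$ points, $$|\Pi_{\alpha,\beta}(P)|\le C n^2 .$$
   Context: For a finite set $P\subset\mathbb R^2$ and real numbers $\alpha,\beta$, define the set of ordered triples $$\Pi_{\alpha,\beta}(P)=\{(p,q,r)\in P\times P\times P:\ p\cdot q=\alpha \text{ and } p\cdot r=\beta\},$$ where $\cdot$ is the standard dot product on $\mathbb R^2$ (the points $p,q,r$ need not be distinct). *)

theory Defs
  imports "HOL-Analysis.Analysis"
begin

definition Pi_ab :: "real \<Rightarrow> real \<Rightarrow> (real^2) set \<Rightarrow> ((real^2) \<times> (real^2) \<times> (real^2)) set" where
  "Pi_ab \<alpha> \<beta> P = {(p, q, r). p \<in> P \<and> q \<in> P \<and> r \<in> P \<and> p \<bullet> q = \<alpha> \<and> p \<bullet> r = \<beta>}"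

end

theory Submission
  imports Defs
begin

lemma inner2: "(x::real^2) \<bullet> y = x$1 * y$1 + x$2 * y$2"
  by (simp add: inner_vec_def sum_2)

lemma det_zero:
  fixes d q r :: "real^2"
  assumes "d \<noteq> 0" "d \<bullet> q = 0" "d \<bullet> r = 0"
  shows "q$1 * r$2 = q$2 * r$1"
proof -
  have e1: "d$1*q$1 + d$2*q$2 = 0" "d$1*r$1 + d$2*r$2 = 0" using assms inner2 by auto
  have a: "d$1 * (q$1 * r$2 - q$2 * r$1) = 0"
  proof -
    have "d$1 * (q$1 * r$2 - q$2 * r$1) = (d$1*q$1) * r$2 - (d$1*r$1) * q$2" by algebra
    also have "\<dots> = (- (d$2*q$2)) * r$2 - (-(d$2*r$2)) * q$2"
    proof -
      have "d$1*q$1 = -(d$2*q$2)" "d$1*r$1 = -(d$2*r$2)" using e1 by linarith+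
      then show ?thesis by simp
    qed
    also have "\<dots> = 0" by algebra
    finally show ?thesis .
  qed
  have b: "d$2 * (q$1 * r$2 - q$2 * r$1) = 0"
  proof -
    have "d$2 * (q$1 * r$2 - q$2 * r$1) = (d$2*r$2) * q$1 - (d$2*q$2) * r$1" by algebra
    also have "\<dots> = (- (d$1*r$1)) * q$1 - (-(d$1*q$1)) * r$1"
    proof -
      have "d$2*r$2 = -(d$1*r$1)" "d$2*q$2 = -(d$1*q$1)" using e1 by linarith+
      then show ?thesis by simp
    qed
    also have "\<dots> = 0" by algebra
    finally show ?thesis .
  qed
  have "d$1 \<noteq> 0 \<or> d$2 \<noteq> 0" using assms(1) by (metis vec_eq_iff exhaust_2 zero_index)
  then show ?thesis using a b by auto
qed

lemma dep_r:
  fixes p q r :: "real^2"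
  assumes "q$1 * r$2 = q$2 * r$1" "p \<bullet> q = \<alpha>" "p \<bullet> r = \<beta>" "\<alpha> \<noteq> 0"
  shows "r = (\<beta>/\<alpha>) *\<^sub>R q"
proof -
  have h1: "\<alpha> * r$1 = \<beta> * q$1"
  proof -
    have "\<alpha> * r$1 - \<beta> * q$1 = (p$1*q$1 + p$2*q$2) * r$1 - (p$1*r$1+p$2*r$2)*q$1"
      using assms inner2 by simp
    also have "\<dots> = p$2 * (q$2*r$1 - q$1*r$2)" by algebra
    also have "\<dots> = 0" using assms(1) by simp
    finally show ?thesis by simp
  qed
  have h2: "\<alpha> * r$2 = \<beta> * q$2"
  proof -
    have "\<alpha> * r$2 - \<beta> * q$2 = (p$1*q$1 + p$2*q$2) * r$2 - (p$1*r$1+p$2*r$2)*q$2"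
      using assms inner2 by simp
    also have "\<dots> = p$1 * (q$1*r$2 - q$2*r$1)" by algebra
    also have "\<dots> = 0" using assms(1) by simp
    finally show ?thesis by simp
  qed
  show ?thesis unfolding vec_eq_iff forall_2
    using h1 h2 assms(4) by (simp add: field_simps)
qed

lemma main_bound:
  fixes \<alpha> \<beta> :: real and P :: "(real^2) set"
  assumes "\<alpha> \<noteq> 0" "finite P"
  shows "card (Pi_ab \<alpha> \<beta> P) \<le> 2 * (card P)^2"
proof -
  let ?Pi = "Pi_ab \<alpha> \<beta> P"
  define A where "A = {x\<in>?Pi. snd (snd x) = (\<beta>/\<alpha>) *\<^sub>R fst (snd x)}"
  define B where "B = ?Pi - A"
  have sub: "?Pi \<subseteq> P \<times> P \<times> P" unfolding Pi_ab_def by auto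
  have fin: "finite ?Pi" using sub assms(2) finite_subset by blast
  have finA: "finite A" "finite B" using fin unfolding A_def B_def by auto
  have "?Pi = A \<union> B" unfolding A_def B_def by auto
  hence c1: "card ?Pi \<le> card A + card B" by (metis card_Un_le)
  have injA: "inj_on (\<lambda>(p,q,r). (p,q)) A"
    unfolding A_def inj_on_def by auto
  have imA: "(\<lambda>(p,q,r). (p,q)) ` A \<subseteq> P \<times> P" unfolding A_def Pi_ab_def by auto
  have cA: "card A \<le> card (P \<times> P)"
    using card_inj_on_le[OF injA imA] assms(2) by auto
  have injB: "inj_on (\<lambda>(p,q,r). (q,r)) B"
  proof (rule inj_onI)
    fix x y assume x: "x \<in> B" and y: "y \<in> B" and e: "(\<lambda>(p,q,r). (q,r)) x = (\<lambda>(p,q,r). (q,r)) y"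
    obtain p q r where xd: "x = (p,q,r)" by (cases x) auto
    obtain p' q' r' where yd: "y = (p',q',r')" by (cases y) auto
    have qq: "q' = q" "r' = r" using e xd yd by auto
    have hx: "p \<bullet> q = \<alpha>" "p \<bullet> r = \<beta>" "r \<noteq> (\<beta>/\<alpha>) *\<^sub>R q"
      using x xd unfolding B_def A_def Pi_ab_def by auto
    have hy: "p' \<bullet> q = \<alpha>" "p' \<bullet> r = \<beta>"
      using y yd qq unfolding B_def A_def Pi_ab_def by auto
    have "p = p'"
    proof (rule ccontr)
      assume ne: "p \<noteq> p'"
      have "(p - p') \<noteq> 0" using ne by simp
      moreover have "(p - p') \<bullet> q = 0" "(p - p') \<bullet> r = 0" using hx hy by (auto simp: inner_diff_left)
      ultimately have "q$1 * r$2 = q$2 * r$1" using det_zero by blast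
      hence "r = (\<beta>/\<alpha>) *\<^sub>R q" using dep_r hx assms(1) by blast
      thus False using hx by simp
    qed
    thus "x = y" using xd yd qq by simp
  qed
  have imB: "(\<lambda>(p,q,r). (q,r)) ` B \<subseteq> P \<times> P" unfolding B_def Pi_ab_def by auto
  have cB: "card B \<le> card (P \<times> P)"
    using card_inj_on_le[OF injB imB] assms(2) by auto
  have "card (P \<times> P) = (card P)^2" by (simp add: card_cartesian_product power2_eq_square)
  thus ?thesis using c1 cA cB by linarith
qed

theorem theorem1:
  fixes \<alpha> \<beta> :: real
  assumes "\<alpha> \<noteq> 0" and "\<beta> \<noteq> 0"
  shows "\<exists>C::real. \<exists>N::real. C > 0 \<and> N > 0 \<and>
           (\<forall>n::nat. \<forall>P :: (real^2) set.
              real n > N \<longrightarrow> finite P \<longrightarrow> card P = n \<longrightarrow>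
              real (card (Pi_ab \<alpha> \<beta> P)) \<le> C * (real n)^2)"
proof (intro exI[of _ 2] exI[of _ 1] conjI allI impI)
  fix n :: nat and P :: "(real^2) set"
  assume "finite P" "card P = n"
  then have "card (Pi_ab \<alpha> \<beta> P) \<le> 2 * n^2" using main_bound assms(1) by blast
  then have "real (card (Pi_ab \<alpha> \<beta> P)) \<le> real (2 * n^2)" by linarith
  then show "real (card (Pi_ab \<alpha> \<beta> P)) \<le> 2 * (real n)^2" by simp
qed auto

end
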